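(* Let $T>0$, $\gamma\in(0,T]$, $\mathcal{T}=[0,T]$, $\mathcal{D}$ the set of Lebesgue measurable $\delta:\mathcal{T}\to[-1,1]$ with $\int_{\mathcal{T}}|\delta(t)|\,\mathrm{d}t\le\gamma$, $\eta^+,\eta^-\in(0,1]$, and let $y(x^b,x^r,\delta,y_0,t)=y_0+\int_0^t\big(\eta^+[x^b+\delta(s)x^r]^+-\frac{1}{\eta^-}[x^b+\delta(s)x^r]^-\big)\mathrm{d}s$. Let $\bar y^+\ge 0$, $\bar y^-\ge 0$, $\bar y>0$, and $0\le y_0\le\bar y$. Then for every $x^b\in\mathbb{R}$ and $x^r\ge 0$: (i) $[x^b+\delta(t)x^r]^+\le\bar y^+$ for all $\delta\in\mathcal{D}$, $t\in\mathcal{T}$ if and only if $x^b+x^r\le\bar y^+$; (ii) $[x^b+\delta(t)x^r]^-\le\bar y^-$ for all $\delta\in\mathcal{D}$, $t\in\mathcal{T}$ if and only if $x^r-x^b\le\bar y^-$; (iii) $y(x^b,x^r,\delta,y_0,t)\le\bar y$ for all $\delta\in\mathcal{D}$, $t\in\mathcal{T}$ if and only if $y_0+\eta^+\big(\max\{\gamma x^b,Tx^b\}+\gamma x^r\big)\le\bar y$; (iv) $y(x^b,x^r,\delta,y_0,t)\ge 0$ for all $\delta\in\mathcal{D}$, $t\in\mathcal{T}$ if and only if $y_0-\frac{1}{\eta^-}\big(\gamma x^r-\min\{\gamma x^b,Tx^b\}\big)\ge 0$.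
   Context: $[a]^+=\max\{a,0\}$, $[a]^-=\max\{-a,0\}$. $x^b$ is the battery's base power, $x^r$ the reserve capacity, $[x^b+\delta(t)x^r]^\pm$ the charging/discharging power, $\bar y^\pm$ the charging/discharging power limits, $\bar y$ the storage capacity, $y_0$ the initial state-of-charge, and $y$ the state-of-charge. *)

theory Defs
  imports "HOL-Analysis.Analysis"
begin

definition pos_part :: "real \<Rightarrow> real" where
  "pos_part a = max a 0"

definition neg_part :: "real \<Rightarrow> real" where
  "neg_part a = max (- a) 0"

definition uset :: "real \<Rightarrow> real \<Rightarrow> (real \<Rightarrow> real) set" where
  "uset T \<gamma> = {\<delta>. \<delta> \<in> borel_measurable (lebesgue_on {0..T})
      \<and> (\<forall>t\<in>{0..T}. -1 \<le> \<delta> t \<and> \<delta> t \<le> 1)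
      \<and> (\<integral>t. \<bar>\<delta> t\<bar> \<partial>(lebesgue_on {0..T})) \<le> \<gamma>}"

definition soc :: "real \<Rightarrow> real \<Rightarrow> real \<Rightarrow> real \<Rightarrow> (real \<Rightarrow> real) \<Rightarrow> real \<Rightarrow> real \<Rightarrow> real" where
  "soc \<eta>p \<eta>m xb xr \<delta> y0 t = y0 + (\<integral>s. (\<eta>p * pos_part (xb + \<delta> s * xr)
      - (1 / \<eta>m) * neg_part (xb + \<delta> s * xr)) \<partial>(lebesgue_on {0..t}))"

end

theory Submission
  imports Defs
begin

lemma integ_bdd:
  fixes f :: "real \<Rightarrow> real"
  assumes "f \<in> borel_measurable (lebesgue_on {0..T})" "\<forall>s\<in>{0..T}. \<bar>f s\<bar> \<le> C"
  shows "integrable (lebesgue_on {0..T}) f"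
proof -
  interpret finite_measure "lebesgue_on {0..T}"
    by (rule finite_measure_lebesgue_on) auto
  show ?thesis
    by (rule integrable_const_bound[where B=C]) (use assms in \<open>auto intro!: AE_I2\<close>)
qed

lemma restrict_int:
  fixes f :: "real \<Rightarrow> real"
  assumes "0 \<le> t" "t \<le> T"
  shows "integral\<^sup>L (lebesgue_on {0..t}) f = integral\<^sup>L (lebesgue_on {0..T}) (\<lambda>s. indicator {0..t} s * f s)"
proof -
  have "integral\<^sup>L (lebesgue_on {0..t}) f = integral\<^sup>L lebesgue (\<lambda>s. indicator {0..t} s *\<^sub>R f s)"
    by (rule integral_restrict_space) auto
  also have "\<dots> = integral\<^sup>L lebesgue (\<lambda>s. indicator {0..T} s *\<^sub>R (indicator {0..t} s * f s))"
    using assms by (intro Bochner_Integration.integral_cong) (auto simp: indicator_def)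
  also have "\<dots> = integral\<^sup>L (lebesgue_on {0..T}) (\<lambda>s. indicator {0..t} s * f s)"
    by (rule integral_restrict_space[symmetric]) auto
  finally show ?thesis .
qed

lemma int_ind:
  assumes "0 \<le> t" "t \<le> T"
  shows "integral\<^sup>L (lebesgue_on {0..T}) (indicator {0..t} :: real \<Rightarrow> real) = t"
proof -
  have "measure (lebesgue_on {0..T}) ({0..t} \<inter> {0..T}) = measure lebesgue {0..t}"
    using assms by (subst measure_restrict_space) auto
  then show ?thesis using assms by simp
qed

lemma int_bound:
  fixes G :: "real \<Rightarrow> real"
  assumes d: "\<delta> \<in> uset T \<gamma>" and t: "t \<in> {0..T}" and G: "G \<in> borel_measurable borel"
    and C: "\<forall>d\<in>{-1..1}. \<bar>G d\<bar> \<le> C" and ab: "a \<ge> 0" "b \<ge> 0"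
    and le: "\<forall>d\<in>{-1..1}. G d \<le> a + b * \<bar>d\<bar>"
  shows "integral\<^sup>L (lebesgue_on {0..t}) (\<lambda>s. G (\<delta> s)) \<le> a * T + b * \<gamma>"
proof -
  have dm: "\<delta> \<in> borel_measurable (lebesgue_on {0..T})" and db: "\<forall>s\<in>{0..T}. -1 \<le> \<delta> s \<and> \<delta> s \<le> 1"
    and di: "(\<integral>s. \<bar>\<delta> s\<bar> \<partial>(lebesgue_on {0..T})) \<le> \<gamma>"
    using d by (auto simp: uset_def)
  have "\<bar>G 0\<bar> \<le> C" using C by auto
  then have C0: "0 \<le> C" by linarith
  have tT: "0 \<le> t" "t \<le> T" using assms(2) by auto
  have ind: "indicator {0..t} \<in> borel_measurable (lebesgue_on {0..T})"
    by (rule borel_measurable_indicator) (use tT in \<open>auto simp: sets_restrict_space_iff\<close>)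
  have Gd: "(\<lambda>s. G (\<delta> s)) \<in> borel_measurable (lebesgue_on {0..T})"
    using measurable_compose[OF dm G] by (simp add: o_def)
  have i1: "integrable (lebesgue_on {0..T}) (\<lambda>s. indicator {0..t} s * G (\<delta> s))"
    apply (rule integ_bdd[where C=C])
    using ind Gd apply measurable
    using C db C0 by (auto simp: indicator_def)
  have iabs: "integrable (lebesgue_on {0..T}) (\<lambda>s. \<bar>\<delta> s\<bar>)"
    by (rule integ_bdd[where C=1]) (use dm db in auto)
  have iind: "integrable (lebesgue_on {0..T}) (indicator {0..t} :: real \<Rightarrow> real)"
    by (rule integ_bdd[where C=1]) (use ind in \<open>auto simp: indicator_def\<close>)
  have "integral\<^sup>L (lebesgue_on {0..t}) (\<lambda>s. G (\<delta> s)) = integral\<^sup>L (lebesgue_on {0..T}) (\<lambda>s. indicator {0..t} s * G (\<delta> s))"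
    by (rule restrict_int[OF tT])
  also have "\<dots> \<le> integral\<^sup>L (lebesgue_on {0..T}) (\<lambda>s. a * indicator {0..t} s + b * \<bar>\<delta> s\<bar>)"
  proof (rule integral_mono)
    show "integrable (lebesgue_on {0..T}) (\<lambda>s. a * indicator {0..t} s + b * \<bar>\<delta> s\<bar>)"
      using iind iabs by auto
    fix s assume "s \<in> space (lebesgue_on {0..T})"
    then have s: "s \<in> {0..T}" by simp
    show "indicator {0..t} s * G (\<delta> s) \<le> a * indicator {0..t} s + b * \<bar>\<delta> s\<bar>"
      using le db s ab by (auto simp: indicator_def)
  qed (rule i1)
  also have "\<dots> = a * t + b * integral\<^sup>L (lebesgue_on {0..T}) (\<lambda>s. \<bar>\<delta> s\<bar>)"
    using iind iabs int_ind[OF tT] by simp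
  also have "\<dots> \<le> a * T + b * \<gamma>"
    using tT ab di by (intro add_mono mult_left_mono) auto
  finally show ?thesis .
qed

lemma wit_in:
  assumes "0 < \<gamma>" "\<gamma> \<le> T" "\<bar>c\<bar> = 1"
  shows "(\<lambda>s. c * indicator {0..\<gamma>} s) \<in> uset T \<gamma>"
proof -
  have ind: "(indicator {0..\<gamma>} :: real \<Rightarrow> real) \<in> borel_measurable (lebesgue_on {0..T})"
    by (rule borel_measurable_indicator) (use assms in \<open>auto simp: sets_restrict_space_iff\<close>)
  have "(\<integral>s. \<bar>c * indicator {0..\<gamma>} s\<bar> \<partial>(lebesgue_on {0..T})) = integral\<^sup>L (lebesgue_on {0..T}) (indicator {0..\<gamma>} :: real \<Rightarrow> real)"
    using assms by (intro Bochner_Integration.integral_cong) (auto simp: indicator_def abs_mult)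
  also have "\<dots> = \<gamma>" using assms by (intro int_ind) auto
  finally have "(\<integral>s. \<bar>c * indicator {0..\<gamma>} s\<bar> \<partial>(lebesgue_on {0..T})) \<le> \<gamma>" by simp
  moreover have "(\<lambda>s. c * indicator {0..\<gamma>} s) \<in> borel_measurable (lebesgue_on {0..T})"
    using ind by measurable
  moreover have "\<forall>t\<in>{0..T}. -1 \<le> c * indicator {0..\<gamma>} t \<and> c * indicator {0..\<gamma>} t \<le> 1"
    using assms by (auto simp: indicator_def abs_if split: if_splits)
  ultimately show ?thesis unfolding uset_def by blast
qed

lemma wit_int:
  fixes G :: "real \<Rightarrow> real"
  assumes "0 \<le> \<gamma>" "\<gamma> \<le> t"
  shows "integral\<^sup>L (lebesgue_on {0..t}) (\<lambda>s. G (c * indicator {0..\<gamma>} s)) = G 0 * t + (G c - G 0) * \<gamma>"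
proof -
  interpret finite_measure "lebesgue_on {0..t}"
    by (rule finite_measure_lebesgue_on) auto
  have ind: "(indicator {0..\<gamma>} :: real \<Rightarrow> real) \<in> borel_measurable (lebesgue_on {0..t})"
    by (rule borel_measurable_indicator) (use assms in \<open>auto simp: sets_restrict_space_iff\<close>)
  have iind: "integrable (lebesgue_on {0..t}) (indicator {0..\<gamma>} :: real \<Rightarrow> real)"
    by (rule integ_bdd[where C=1]) (use ind in \<open>auto simp: indicator_def\<close>)
  have "integral\<^sup>L (lebesgue_on {0..t}) (\<lambda>s. G (c * indicator {0..\<gamma>} s))
      = integral\<^sup>L (lebesgue_on {0..t}) (\<lambda>s. G 0 + (G c - G 0) * indicator {0..\<gamma>} s)"
    by (intro Bochner_Integration.integral_cong) (auto simp: indicator_def)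
  also have "\<dots> = G 0 * measure (lebesgue_on {0..t}) {0..t} + (G c - G 0) * \<gamma>"
    using iind int_ind[of \<gamma> t] assms by simp
  also have "measure (lebesgue_on {0..t}) {0..t} = t"
    using assms by (subst measure_restrict_space) auto
  finally show ?thesis .
qed

theorem proposition1:
  fixes T \<gamma> \<eta>p \<eta>m yp ym ybar y0 xb xr :: real
  assumes "T > 0" and "0 < \<gamma>" and "\<gamma> \<le> T"
    and "0 < \<eta>p" and "\<eta>p \<le> 1" and "0 < \<eta>m" and "\<eta>m \<le> 1"
    and "yp \<ge> 0" and "ym \<ge> 0" and "ybar > 0"
    and "0 \<le> y0" and "y0 \<le> ybar"
    and "xr \<ge> 0"
  shows "((\<forall>\<delta>\<in>uset T \<gamma>. \<forall>t\<in>{0..T}. pos_part (xb + \<delta> t * xr) \<le> yp)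
            \<longleftrightarrow> xb + xr \<le> yp)
       \<and> ((\<forall>\<delta>\<in>uset T \<gamma>. \<forall>t\<in>{0..T}. neg_part (xb + \<delta> t * xr) \<le> ym)
            \<longleftrightarrow> xr - xb \<le> ym)
       \<and> ((\<forall>\<delta>\<in>uset T \<gamma>. \<forall>t\<in>{0..T}. soc \<eta>p \<eta>m xb xr \<delta> y0 t \<le> ybar)
            \<longleftrightarrow> y0 + \<eta>p * (max (\<gamma> * xb) (T * xb) + \<gamma> * xr) \<le> ybar)
       \<and> ((\<forall>\<delta>\<in>uset T \<gamma>. \<forall>t\<in>{0..T}. soc \<eta>p \<eta>m xb xr \<delta> y0 t \<ge> 0)
            \<longleftrightarrow> y0 - (1 / \<eta>m) * (\<gamma> * xr - min (\<gamma> * xb) (T * xb)) \<ge> 0)"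
proof -
  define G where "G d = \<eta>p * pos_part (xb + d * xr) - 1 / \<eta>m * neg_part (xb + d * xr)" for d
  have socG: "soc \<eta>p \<eta>m xb xr \<delta> y0 t = y0 + integral\<^sup>L (lebesgue_on {0..t}) (\<lambda>s. G (\<delta> s))" for \<delta> t
    unfolding soc_def G_def by simp
  have Gm: "G \<in> borel_measurable borel"
    unfolding G_def pos_part_def neg_part_def by measurable
  have Gm': "(\<lambda>d. - G d) \<in> borel_measurable borel"
    using Gm by measurable
  define C where "C = \<eta>p * (\<bar>xb\<bar> + xr) + 1 / \<eta>m * (\<bar>xb\<bar> + xr)"
  have GC: "\<forall>d\<in>{-1..1}. \<bar>G d\<bar> \<le> C"
  proof
    fix d :: real assume d: "d \<in> {-1..1}"
    have "\<bar>d * xr\<bar> \<le> xr" using d assms(13) by (auto simp: abs_mult intro: mult_left_le_one_le)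
    then have a: "\<bar>xb + d * xr\<bar> \<le> \<bar>xb\<bar> + xr" by linarith
    have p: "pos_part (xb + d * xr) \<le> \<bar>xb\<bar> + xr" "pos_part (xb + d * xr) \<ge> 0"
      using a by (auto simp: pos_part_def)
    have n: "neg_part (xb + d * xr) \<le> \<bar>xb\<bar> + xr" "neg_part (xb + d * xr) \<ge> 0"
      using a by (auto simp: neg_part_def)
    have "\<eta>p * pos_part (xb + d * xr) \<le> \<eta>p * (\<bar>xb\<bar> + xr)" using p assms by (intro mult_left_mono) auto
    moreover have "1/\<eta>m * neg_part (xb + d * xr) \<le> 1/\<eta>m * (\<bar>xb\<bar> + xr)" using n assms by (intro mult_left_mono) auto
    moreover have "\<eta>p * pos_part (xb + d * xr) \<ge> 0" "1/\<eta>m * neg_part (xb + d * xr) \<ge> 0"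
      using p n assms by auto
    ultimately show "\<bar>G d\<bar> \<le> C" unfolding G_def C_def by linarith
  qed
  have GC': "\<forall>d\<in>{-1..1}. \<bar>- G d\<bar> \<le> C" using GC by simp
  have dxr: "d * xr \<le> \<bar>d\<bar> * xr" for d using assms(13) by (intro mult_right_mono) auto
  have w1: "(\<lambda>s. 1 * indicator {0..\<gamma>} s) \<in> uset T \<gamma>"
    by (rule wit_in) (use assms in auto)
  have w2: "(\<lambda>s. (-1) * indicator {0..\<gamma>} s) \<in> uset T \<gamma>"
    by (rule wit_in) (use assms in auto)
  have g0: "(0::real) \<in> {0..\<gamma>}" using assms by auto
  have T0: "(0::real) \<in> {0..T}" using assms by auto
  have gT: "\<gamma> \<in> {0..T}" using assms by auto
  have TT: "T \<in> {0..T}" using assms by auto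
  have P1: "(\<forall>\<delta>\<in>uset T \<gamma>. \<forall>t\<in>{0..T}. pos_part (xb + \<delta> t * xr) \<le> yp) \<longleftrightarrow> xb + xr \<le> yp"
  proof
    assume h: "\<forall>\<delta>\<in>uset T \<gamma>. \<forall>t\<in>{0..T}. pos_part (xb + \<delta> t * xr) \<le> yp"
    have "pos_part (xb + 1 * indicator {0..\<gamma>} (0::real) * xr) \<le> yp" by (rule bspec[OF bspec[OF h w1] T0])
    then show "xb + xr \<le> yp" using g0 by (simp add: pos_part_def)
  next
    assume h: "xb + xr \<le> yp"
    show "\<forall>\<delta>\<in>uset T \<gamma>. \<forall>t\<in>{0..T}. pos_part (xb + \<delta> t * xr) \<le> yp"
    proof (intro ballI)
      fix \<delta> t assume d: "\<delta> \<in> uset T \<gamma>" and t: "t \<in> {0..T}"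
      then have "\<delta> t \<le> 1" by (auto simp: uset_def)
      then have "\<delta> t * xr \<le> xr" using mult_right_mono[of "\<delta> t" 1 xr] assms(13) by simp
      then show "pos_part (xb + \<delta> t * xr) \<le> yp" using h assms(8) by (simp add: pos_part_def)
    qed
  qed
  have P2: "(\<forall>\<delta>\<in>uset T \<gamma>. \<forall>t\<in>{0..T}. neg_part (xb + \<delta> t * xr) \<le> ym) \<longleftrightarrow> xr - xb \<le> ym"
  proof
    assume h: "\<forall>\<delta>\<in>uset T \<gamma>. \<forall>t\<in>{0..T}. neg_part (xb + \<delta> t * xr) \<le> ym"
    have "neg_part (xb + (-1) * indicator {0..\<gamma>} (0::real) * xr) \<le> ym" by (rule bspec[OF bspec[OF h w2] T0])
    then show "xr - xb \<le> ym" using g0 by (simp add: neg_part_def)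
  next
    assume h: "xr - xb \<le> ym"
    show "\<forall>\<delta>\<in>uset T \<gamma>. \<forall>t\<in>{0..T}. neg_part (xb + \<delta> t * xr) \<le> ym"
    proof (intro ballI)
      fix \<delta> t assume d: "\<delta> \<in> uset T \<gamma>" and t: "t \<in> {0..T}"
      then have "-1 \<le> \<delta> t" by (auto simp: uset_def)
      then have "- xr \<le> \<delta> t * xr" using assms(13) by (metis mult_minus_left mult_right_mono mult_1)
      then show "neg_part (xb + \<delta> t * xr) \<le> ym" using h assms(9) by (simp add: neg_part_def)
    qed
  qed
  have P3: "(\<forall>\<delta>\<in>uset T \<gamma>. \<forall>t\<in>{0..T}. soc \<eta>p \<eta>m xb xr \<delta> y0 t \<le> ybar)
            \<longleftrightarrow> y0 + \<eta>p * (max (\<gamma> * xb) (T * xb) + \<gamma> * xr) \<le> ybar"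
  proof
    assume h: "\<forall>\<delta>\<in>uset T \<gamma>. \<forall>t\<in>{0..T}. soc \<eta>p \<eta>m xb xr \<delta> y0 t \<le> ybar"
    show "y0 + \<eta>p * (max (\<gamma> * xb) (T * xb) + \<gamma> * xr) \<le> ybar"
    proof (cases "xb \<ge> 0")
      case True
      have "soc \<eta>p \<eta>m xb xr (\<lambda>s. 1 * indicator {0..\<gamma>} s) y0 T \<le> ybar" by (rule bspec[OF bspec[OF h w1] TT])
      then have "y0 + (G 0 * T + (G 1 - G 0) * \<gamma>) \<le> ybar"
        unfolding socG using wit_int[of \<gamma> T G 1] assms by simp
      moreover have "G 0 = \<eta>p * xb" "G 1 = \<eta>p * (xb + xr)" using True assms(13)
        by (auto simp: G_def pos_part_def neg_part_def)
      moreover have "max (\<gamma> * xb) (T * xb) = T * xb" using True assms by (simp add: mult_right_mono)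
      ultimately show ?thesis by (simp add: algebra_simps)
    next
      case False
      have mx: "max (\<gamma> * xb) (T * xb) = \<gamma> * xb" using False assms by (simp add: mult_right_mono_neg)
      show ?thesis
      proof (cases "xb + xr \<ge> 0")
        case True
        have "soc \<eta>p \<eta>m xb xr (\<lambda>s. 1 * indicator {0..\<gamma>} s) y0 \<gamma> \<le> ybar" by (rule bspec[OF bspec[OF h w1] gT])
        then have "y0 + (G 0 * \<gamma> + (G 1 - G 0) * \<gamma>) \<le> ybar"
          unfolding socG using wit_int[of \<gamma> \<gamma> G 1] assms by simp
        moreover have "G 1 = \<eta>p * (xb + xr)" using True
          by (auto simp: G_def pos_part_def neg_part_def)
        ultimately show ?thesis using mx by (simp add: algebra_simps)
      next
        case F2: False
        have "\<eta>p * (\<gamma> * xb + \<gamma> * xr) \<le> 0"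
          using F2 assms by (simp add: mult_nonneg_nonpos distrib_left[symmetric])
        then show ?thesis using mx assms by simp
      qed
    qed
  next
    assume h: "y0 + \<eta>p * (max (\<gamma> * xb) (T * xb) + \<gamma> * xr) \<le> ybar"
    show "\<forall>\<delta>\<in>uset T \<gamma>. \<forall>t\<in>{0..T}. soc \<eta>p \<eta>m xb xr \<delta> y0 t \<le> ybar"
    proof (intro ballI)
      fix \<delta> t assume d: "\<delta> \<in> uset T \<gamma>" and t: "t \<in> {0..T}"
      show "soc \<eta>p \<eta>m xb xr \<delta> y0 t \<le> ybar"
      proof (cases "xb \<ge> 0")
        case True
        have le: "\<forall>d\<in>{-1..1}. G d \<le> \<eta>p * xb + \<eta>p * xr * \<bar>d\<bar>"
        proof
          fix d :: real
          have "pos_part (xb + d * xr) \<le> xb + \<bar>d\<bar> * xr"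
            using dxr[of d] True assms(13) by (simp add: pos_part_def)
          then have "\<eta>p * pos_part (xb + d * xr) \<le> \<eta>p * (xb + \<bar>d\<bar> * xr)"
            using assms by (intro mult_left_mono) auto
          moreover have "1 / \<eta>m * neg_part (xb + d * xr) \<ge> 0" using assms by (simp add: neg_part_def)
          ultimately show "G d \<le> \<eta>p * xb + \<eta>p * xr * \<bar>d\<bar>" unfolding G_def by (simp add: algebra_simps)
        qed
        have "integral\<^sup>L (lebesgue_on {0..t}) (\<lambda>s. G (\<delta> s)) \<le> \<eta>p * xb * T + \<eta>p * xr * \<gamma>"
          by (rule int_bound[OF d t Gm GC _ _ le]) (use True assms in auto)
        moreover have "max (\<gamma> * xb) (T * xb) = T * xb" using True assms by (simp add: mult_right_mono)
        ultimately show ?thesis using h unfolding socG by (simp add: algebra_simps)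
      next
        case False
        have mx: "max (\<gamma> * xb) (T * xb) = \<gamma> * xb" using False assms by (simp add: mult_right_mono_neg)
        have le: "\<forall>d\<in>{-1..1}. G d \<le> 0 + \<eta>p * max (xb + xr) 0 * \<bar>d\<bar>"
        proof
          fix d :: real assume d1: "d \<in> {-1..1}"
          show "G d \<le> 0 + \<eta>p * max (xb + xr) 0 * \<bar>d\<bar>"
          proof (cases "xb + d * xr \<ge> 0")
            case True
            have "d \<ge> 0"
            proof (rule ccontr)
              assume "\<not> d \<ge> 0"
              then have "d * xr \<le> 0" using assms(13) by (simp add: mult_nonpos_nonneg)
              then show False using True False by linarith
            qed
            have "xb \<le> d * xb" using d1 False by (simp add: mult_left_le_one_le mult_right_mono_neg[of d 1 xb, simplified])
            then have "xb + d * xr \<le> d * (xb + xr)" by (simp add: algebra_simps)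
            also have "\<dots> \<le> max (xb + xr) 0 * \<bar>d\<bar>" using \<open>d \<ge> 0\<close> by (simp add: mult.commute mult_left_mono)
            finally have "\<eta>p * (xb + d * xr) \<le> \<eta>p * (max (xb + xr) 0 * \<bar>d\<bar>)"
              using assms by (intro mult_left_mono) auto
            then show ?thesis using True unfolding G_def by (simp add: pos_part_def neg_part_def)
          next
            case F3: False
            have "0 \<le> \<eta>p * max (xb + xr) 0 * \<bar>d\<bar>" using assms by simp
            moreover have "1 / \<eta>m * neg_part (xb + d * xr) \<ge> 0" using assms by (simp add: neg_part_def)
            ultimately show ?thesis using F3 unfolding G_def by (simp add: pos_part_def)
          qed
        qed
        have "integral\<^sup>L (lebesgue_on {0..t}) (\<lambda>s. G (\<delta> s)) \<le> 0 * T + \<eta>p * max (xb + xr) 0 * \<gamma>"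
          by (rule int_bound[OF d t Gm GC _ _ le]) (use assms in auto)
        moreover have "\<eta>p * max (xb + xr) 0 * \<gamma> \<le> max (\<eta>p * (\<gamma> * xb + \<gamma> * xr)) 0"
          using assms by (auto simp: max_def algebra_simps)
        ultimately have I: "integral\<^sup>L (lebesgue_on {0..t}) (\<lambda>s. G (\<delta> s)) \<le> max (\<eta>p * (\<gamma> * xb + \<gamma> * xr)) 0"
          by linarith
        have h': "y0 + \<eta>p * (\<gamma> * xb + \<gamma> * xr) \<le> ybar" using h mx by simp
        show ?thesis unfolding socG using I h' assms(12) by (simp add: max_def split: if_split_asm)
      qed
    qed
  qed
  have P4: "(\<forall>\<delta>\<in>uset T \<gamma>. \<forall>t\<in>{0..T}. soc \<eta>p \<eta>m xb xr \<delta> y0 t \<ge> 0)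
            \<longleftrightarrow> y0 - (1 / \<eta>m) * (\<gamma> * xr - min (\<gamma> * xb) (T * xb)) \<ge> 0"
  proof
    assume h: "\<forall>\<delta>\<in>uset T \<gamma>. \<forall>t\<in>{0..T}. soc \<eta>p \<eta>m xb xr \<delta> y0 t \<ge> 0"
    show "y0 - (1 / \<eta>m) * (\<gamma> * xr - min (\<gamma> * xb) (T * xb)) \<ge> 0"
    proof (cases "xb \<le> 0")
      case True
      have "soc \<eta>p \<eta>m xb xr (\<lambda>s. (-1) * indicator {0..\<gamma>} s) y0 T \<ge> 0" by (rule bspec[OF bspec[OF h w2] TT])
      then have "y0 + (G 0 * T + (G (-1) - G 0) * \<gamma>) \<ge> 0"
        unfolding socG using wit_int[of \<gamma> T G "-1"] assms by simp
      moreover have "G 0 = 1 / \<eta>m * xb" "G (-1) = - (1 / \<eta>m) * (xr - xb)" using True assms(13)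
        by (auto simp: G_def pos_part_def neg_part_def)
      moreover have "min (\<gamma> * xb) (T * xb) = T * xb" using True assms by (simp add: mult_right_mono_neg)
      ultimately show ?thesis using assms(6) by (simp add: field_simps)
    next
      case False
      have mn: "min (\<gamma> * xb) (T * xb) = \<gamma> * xb" using False assms by (simp add: mult_right_mono)
      show ?thesis
      proof (cases "xr - xb \<ge> 0")
        case True
        have "soc \<eta>p \<eta>m xb xr (\<lambda>s. (-1) * indicator {0..\<gamma>} s) y0 \<gamma> \<ge> 0" by (rule bspec[OF bspec[OF h w2] gT])
        then have "y0 + (G 0 * \<gamma> + (G (-1) - G 0) * \<gamma>) \<ge> 0"
          unfolding socG using wit_int[of \<gamma> \<gamma> G "-1"] assms by simp
        moreover have "G (-1) = - (1 / \<eta>m) * (xr - xb)" using True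
          by (auto simp: G_def pos_part_def neg_part_def)
        ultimately show ?thesis using mn assms(6) by (simp add: field_simps)
      next
        case F2: False
        have "(1 / \<eta>m) * (\<gamma> * xr - \<gamma> * xb) \<le> 0"
          using F2 assms by (simp add: mult_nonneg_nonpos right_diff_distrib[symmetric] divide_nonpos_pos)
        then show ?thesis using mn assms by simp
      qed
    qed
  next
    assume h: "y0 - (1 / \<eta>m) * (\<gamma> * xr - min (\<gamma> * xb) (T * xb)) \<ge> 0"
    show "\<forall>\<delta>\<in>uset T \<gamma>. \<forall>t\<in>{0..T}. soc \<eta>p \<eta>m xb xr \<delta> y0 t \<ge> 0"
    proof (intro ballI)
      fix \<delta> t assume d: "\<delta> \<in> uset T \<gamma>" and t: "t \<in> {0..T}"
      have neg: "integral\<^sup>L (lebesgue_on {0..t}) (\<lambda>s. - G (\<delta> s)) = - integral\<^sup>L (lebesgue_on {0..t}) (\<lambda>s. G (\<delta> s))"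
        by simp
      have GG: "- G d \<le> 1 / \<eta>m * neg_part (xb + d * xr)" for d
        using assms unfolding G_def by (simp add: pos_part_def)
      show "soc \<eta>p \<eta>m xb xr \<delta> y0 t \<ge> 0"
      proof (cases "xb \<le> 0")
        case True
        have le: "\<forall>d\<in>{-1..1}. - G d \<le> 1 / \<eta>m * (- xb) + 1 / \<eta>m * xr * \<bar>d\<bar>"
        proof
          fix d :: real
          have nn: "0 \<le> \<bar>d\<bar> * xr" using assms(13) by simp
          have dd: "- (d * xr) \<le> \<bar>d\<bar> * xr" using dxr[of "-d"] by simp
          have "neg_part (xb + d * xr) \<le> - xb + \<bar>d\<bar> * xr"
            unfolding neg_part_def using dd True nn by (intro max.boundedI) linarith+
          then have "1 / \<eta>m * neg_part (xb + d * xr) \<le> 1 / \<eta>m * (- xb + \<bar>d\<bar> * xr)"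
            using assms by (intro mult_left_mono) auto
          then show "- G d \<le> 1 / \<eta>m * (- xb) + 1 / \<eta>m * xr * \<bar>d\<bar>" using GG[of d] by (simp add: algebra_simps)
        qed
        have "integral\<^sup>L (lebesgue_on {0..t}) (\<lambda>s. - G (\<delta> s)) \<le> 1 / \<eta>m * (- xb) * T + 1 / \<eta>m * xr * \<gamma>"
          by (rule int_bound[OF d t Gm' GC' _ _ le]) (use True assms in \<open>auto simp: divide_nonpos_pos\<close>)
        moreover have "min (\<gamma> * xb) (T * xb) = T * xb" using True assms by (simp add: mult_right_mono_neg)
        ultimately show ?thesis using h neg unfolding socG by (simp add: algebra_simps)
      next
        case False
        have mn: "min (\<gamma> * xb) (T * xb) = \<gamma> * xb" using False assms by (simp add: mult_right_mono)
        have le: "\<forall>d\<in>{-1..1}. - G d \<le> 0 + 1 / \<eta>m * max (xr - xb) 0 * \<bar>d\<bar>"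
        proof
          fix d :: real assume d1: "d \<in> {-1..1}"
          show "- G d \<le> 0 + 1 / \<eta>m * max (xr - xb) 0 * \<bar>d\<bar>"
          proof (cases "xb + d * xr \<le> 0")
            case True
            have "d \<le> 0"
            proof (rule ccontr)
              assume "\<not> d \<le> 0"
              then have "d * xr \<ge> 0" using assms(13) by simp
              then show False using True False by linarith
            qed
            have "- xb \<le> - \<bar>d\<bar> * xb" using d1 False mult_right_mono[of "\<bar>d\<bar>" 1 xb] by auto
            then have "- (xb + d * xr) \<le> \<bar>d\<bar> * (xr - xb)" using \<open>d \<le> 0\<close> by (simp add: algebra_simps)
            also have "\<dots> \<le> max (xr - xb) 0 * \<bar>d\<bar>" by (simp add: mult.commute mult_left_mono)
            finally have "1 / \<eta>m * (- (xb + d * xr)) \<le> 1 / \<eta>m * (max (xr - xb) 0 * \<bar>d\<bar>)"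
              using assms by (intro mult_left_mono) auto
            then show ?thesis using True GG[of d] by (simp add: neg_part_def)
          next
            case F3: False
            have "0 \<le> 1 / \<eta>m * max (xr - xb) 0 * \<bar>d\<bar>" using assms by simp
            then show ?thesis using F3 GG[of d] by (simp add: neg_part_def)
          qed
        qed
        have "integral\<^sup>L (lebesgue_on {0..t}) (\<lambda>s. - G (\<delta> s)) \<le> 0 * T + 1 / \<eta>m * max (xr - xb) 0 * \<gamma>"
          by (rule int_bound[OF d t Gm' GC' _ _ le]) (use assms in auto)
        moreover have "1 / \<eta>m * max (xr - xb) 0 * \<gamma> \<le> max (1 / \<eta>m * (\<gamma> * xr - \<gamma> * xb)) 0"
        proof (cases "xr - xb \<ge> 0")
          case True
          then have "1 / \<eta>m * max (xr - xb) 0 * \<gamma> = 1 / \<eta>m * (\<gamma> * xr - \<gamma> * xb)"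
            by (simp add: algebra_simps diff_divide_distrib)
          then show ?thesis by (metis max.cobounded1)
        next
          case False
          then have "max (xr - xb) 0 = 0" by simp
          then show ?thesis by simp
        qed
        ultimately have I: "- integral\<^sup>L (lebesgue_on {0..t}) (\<lambda>s. G (\<delta> s)) \<le> max (1 / \<eta>m * (\<gamma> * xr - \<gamma> * xb)) 0"
          using neg by linarith
        have h': "y0 - 1 / \<eta>m * (\<gamma> * xr - \<gamma> * xb) \<ge> 0" using h mn by simp
        show ?thesis unfolding socG using I h' assms(11) by (simp add: max_def split: if_split_asm)
      qed
    qed
  qed
  show ?thesis using P1 P2 P3 P4 by blast
qed

end
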